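(* Let $X$ be a compact metric space with metric $d$. If a homeomorphism $f\colon X\to X$ has the contractive shadowing property, then $X$ is a finite set.
   Context: For $\delta>0$, a sequence $(x_i)_{i\ge0}$ is a $\delta$-pseudo orbit of $f$ if $d(f(x_i),x_{i+1})\le\delta$ for all $i\ge0$; it is $\epsilon$-shadowed by $x$ if $d(f^i(x),x_i)\le\epsilon$ for all $i\ge0$. For $L>0$, $f$ has the $L$-Lipschitz shadowing property if there is $\delta_0>0$ such that for every $0<\delta\le\delta_0$, every $\delta$-pseudo orbit of $f$ is $L\delta$-shadowed by some point of $X$. $f$ has the contractive shadowing property if it has the $L$-Lipschitz shadowing property for some $0<L<1$. *)

theory Defs
  imports "HOL-Analysis.Analysis"
begin

text \<open>The space X is modelled as a set S in a metric space type; f maps S to S.\<close>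

definition pseudo_orbit :: "'a::metric_space set \<Rightarrow> ('a \<Rightarrow> 'a) \<Rightarrow> real \<Rightarrow> (nat \<Rightarrow> 'a) \<Rightarrow> bool" where
  "pseudo_orbit S f \<delta> xs \<longleftrightarrow> (\<forall>i. xs i \<in> S) \<and> (\<forall>i. dist (f (xs i)) (xs (Suc i)) \<le> \<delta>)"

definition shadowed_by :: "('a::metric_space \<Rightarrow> 'a) \<Rightarrow> real \<Rightarrow> (nat \<Rightarrow> 'a) \<Rightarrow> 'a \<Rightarrow> bool" where
  "shadowed_by f \<epsilon> xs x \<longleftrightarrow> (\<forall>i. dist ((f ^^ i) x) (xs i) \<le> \<epsilon>)"

definition lipschitz_shadowing :: "'a::metric_space set \<Rightarrow> ('a \<Rightarrow> 'a) \<Rightarrow> real \<Rightarrow> bool" where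
  "lipschitz_shadowing S f L \<longleftrightarrow>
     (\<exists>\<delta>0>0. \<forall>\<delta>. 0 < \<delta> \<and> \<delta> \<le> \<delta>0 \<longrightarrow>
        (\<forall>xs. pseudo_orbit S f \<delta> xs \<longrightarrow> (\<exists>x\<in>S. shadowed_by f (L * \<delta>) xs x)))"

definition contractive_shadowing :: "'a::metric_space set \<Rightarrow> ('a \<Rightarrow> 'a) \<Rightarrow> bool" where
  "contractive_shadowing S f \<longleftrightarrow> (\<exists>L. 0 < L \<and> L < 1 \<and> lipschitz_shadowing S f L)"

end

theory Submission
  imports Defs
begin

definition splice :: "('a \<Rightarrow> 'a) \<Rightarrow> 'a \<Rightarrow> nat \<Rightarrow> 'a \<Rightarrow> nat \<Rightarrow> 'a" where
  "splice f x n w = (\<lambda>i. if i < n then (f^^i) x else (f^^(i-n)) w)"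

lemma funpow_in:
  assumes fS: "\<And>x. x \<in> S \<Longrightarrow> f x \<in> S" and "x \<in> S"
  shows "(f^^i) x \<in> S"
  by (induction i) (auto simp: assms)

lemma splice_po:
  fixes S :: "'a::metric_space set"
  assumes fS: "\<And>x. x \<in> S \<Longrightarrow> f x \<in> S" and x: "x \<in> S" and w: "w \<in> S"
    and eta: "0 \<le> \<eta>" and d: "n > 0 \<longrightarrow> dist ((f^^n) x) w \<le> \<eta>"
  shows "pseudo_orbit S f \<eta> (splice f x n w)"
  unfolding pseudo_orbit_def
proof safe
  fix i show "splice f x n w i \<in> S"
    unfolding splice_def using funpow_in[OF fS x] funpow_in[OF fS w] by auto
next
  fix i
  consider "Suc i < n" | "Suc i = n" | "i \<ge> n" by linarith
  then show "dist (f (splice f x n w i)) (splice f x n w (Suc i)) \<le> \<eta>"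
  proof cases
    case 1 then show ?thesis using eta by (simp add: splice_def)
  next
    case 2 then have "(f^^n) x = f ((f^^i) x)" by auto
    then show ?thesis using 2 d by (simp add: splice_def)
  next
    case 3 then have "Suc i - n = Suc (i - n)" by auto
    then show ?thesis using 3 eta by (simp add: splice_def)
  qed
qed

lemma cons_po:
  assumes "pseudo_orbit S f \<eta> s" "p \<in> S" "dist (f p) (s 0) \<le> \<eta>"
  shows "pseudo_orbit S f \<eta> (\<lambda>i. if i = 0 then p else s (i-1))"
  using assms unfolding pseudo_orbit_def
  by (auto split: nat.splits) (metis Suc_pred)

lemma geo_bound:
  fixes L :: real assumes "0 < L" "L < 1"
  shows "(\<Sum>j<m. L^Suc j) \<le> L/(1-L)"
proof -
  have "(1-L) * (\<Sum>j<m. L^Suc j) = L - L^Suc m"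
  proof (induction m)
    case (Suc m)
    have "(1-L) * (\<Sum>j<Suc m. L^Suc j) = (1-L) * (\<Sum>j<m. L^Suc j) + (1-L) * L^Suc m"
      by (simp add: distrib_left)
    also have "\<dots> = L - L^Suc (Suc m)" using Suc by (simp add: algebra_simps)
    finally show ?case .
  qed simp
  moreover have "L^Suc m \<ge> 0" using assms by simp
  ultimately have "(1-L) * (\<Sum>j<m. L^Suc j) \<le> L" by linarith
  then show ?thesis using assms by (simp add: field_simps)
qed

lemma funpow_cont:
  assumes fS: "\<And>x. x \<in> S \<Longrightarrow> f x \<in> S" and c: "continuous_on S f"
  shows "continuous_on S (f^^n)"
proof (induction n)
  case 0 then show ?case by (simp add: continuous_on_id)
next
  case (Suc n)
  have "continuous_on ((f^^n) ` S) f"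
    using c by (rule continuous_on_subset) (auto intro: funpow_in[OF fS])
  from continuous_on_compose[OF Suc.IH this] show ?case by (simp add: o_def)
qed

lemma funpow_inj:
  assumes fS: "\<And>x. x \<in> S \<Longrightarrow> f x \<in> S" and inj: "\<And>x y. x \<in> S \<Longrightarrow> y \<in> S \<Longrightarrow> f x = f y \<Longrightarrow> x = y"
  shows "x \<in> S \<Longrightarrow> y \<in> S \<Longrightarrow> (f^^n) x = (f^^n) y \<Longrightarrow> x = y"
proof (induction n arbitrary: x y)
  case 0 then show ?case by simp
next
  case (Suc n)
  then have "(f^^n) (f x) = (f^^n) (f y)" by (simp add: funpow_Suc_right del: funpow.simps)
  then have "f x = f y" using Suc fS by blast
  then show ?case using Suc inj by blast
qed

lemma lemma_M:
  fixes S :: "'a::metric_space set"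
  assumes fS: "\<And>x. x \<in> S \<Longrightarrow> f x \<in> S"
    and sh: "\<And>\<eta> xs. 0 < \<eta> \<Longrightarrow> \<eta> \<le> \<delta>0 \<Longrightarrow> pseudo_orbit S f \<eta> xs \<Longrightarrow> \<exists>x\<in>S. shadowed_by f (L*\<eta>) xs x"
    and L: "0 < L" "L < 1" and d0: "0 < \<delta>0"
    and a: "a \<in> S" and b: "b \<in> S" and dab: "dist ((f^^k) a) ((f^^k) b) \<le> \<delta>0"
  shows "j \<le> k \<Longrightarrow> \<exists>z\<in>S. dist z ((f^^(k-j)) a) \<le> L^j*\<delta>0 \<and> dist ((f^^j) z) ((f^^k) b) \<le> L^j*\<delta>0"
proof (induction j)
  case 0
  show ?case using dab d0 funpow_in[OF fS b] by (auto intro!: bexI[of _ "(f^^k) b"] simp: dist_commute)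
next
  case (Suc j)
  then obtain z where z: "z \<in> S" "dist z ((f^^(k-j)) a) \<le> L^j*\<delta>0" "dist ((f^^j) z) ((f^^k) b) \<le> L^j*\<delta>0"
    by auto
  define v where "v = (f^^k) b"
  define p where "p = (f^^(k - Suc j)) a"
  define \<eta> where "\<eta> = L^j*\<delta>0"
  have eta: "0 < \<eta>" "\<eta> \<le> \<delta>0" using L d0 by (auto simp: \<eta>_def power_le_one mult_le_cancel_right1)
  have v: "v \<in> S" unfolding v_def using funpow_in[OF fS b] .
  have p: "p \<in> S" unfolding p_def using funpow_in[OF fS a] .
  have fp: "f p = (f^^(k-j)) a"
  proof -
    have "k - j = Suc (k - Suc j)" using Suc by auto
    then show ?thesis by (simp add: p_def)
  qed
  have po1: "pseudo_orbit S f \<eta> (splice f z j v)"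
    by (rule splice_po[OF fS z(1) v]) (use eta z in \<open>auto simp: \<eta>_def v_def\<close>)
  have "dist (f p) (splice f z j v 0) \<le> \<eta>"
  proof (cases "j = 0")
    case True then show ?thesis using dab by (simp add: splice_def fp v_def \<eta>_def)
  next
    case False then show ?thesis using z by (simp add: splice_def fp dist_commute \<eta>_def)
  qed
  then have po: "pseudo_orbit S f \<eta> (\<lambda>i. if i = 0 then p else splice f z j v (i-1))"
    by (rule cons_po[OF po1 p])
  obtain x where x: "x \<in> S" "shadowed_by f (L*\<eta>) (\<lambda>i. if i = 0 then p else splice f z j v (i-1)) x"
    using sh[OF eta po] by blast
  have "dist ((f^^0) x) p \<le> L*\<eta>" using x(2) unfolding shadowed_by_def by (metis (full_types))
  moreover have "dist ((f^^Suc j) x) (splice f z j v j) \<le> L*\<eta>"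
  proof -
    have "dist ((f^^Suc j) x) (if Suc j = 0 then p else splice f z j v (Suc j - 1)) \<le> L*\<eta>"
      using x(2) unfolding shadowed_by_def by blast
    then show ?thesis by simp
  qed
  ultimately show ?case using x(1)
    by (intro bexI[of _ x]) (auto simp: splice_def v_def p_def \<eta>_def)
qed

lemma lemma_R:
  fixes S :: "'a::metric_space set"
  assumes fS: "\<And>x. x \<in> S \<Longrightarrow> f x \<in> S"
    and sh: "\<And>\<eta> xs. 0 < \<eta> \<Longrightarrow> \<eta> \<le> \<delta>0 \<Longrightarrow> pseudo_orbit S f \<eta> xs \<Longrightarrow> \<exists>x\<in>S. shadowed_by f (L*\<eta>) xs x"
    and L: "0 < L" "L < 1" and d: "0 < \<delta>" "\<delta> \<le> \<delta>0"
    and cS: "compact S" and cf: "continuous_on S f"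
    and y: "y \<in> S" and w: "w \<in> S" and n: "n > 0" and dyw: "dist ((f^^n) y) w \<le> \<delta>"
  shows "\<exists>y'\<in>S. (f^^n) y' = w \<and> dist y y' \<le> \<delta> * (L/(1-L))"
proof -
  have step: "\<exists>x\<in>S. dist y x \<le> \<delta> * (\<Sum>j<m. L^Suc j) \<and> dist ((f^^n) x) w \<le> L^m * \<delta>" for m
  proof (induction m)
    case 0 then show ?case using y dyw by auto
  next
    case (Suc m)
    then obtain x where x: "x \<in> S" "dist y x \<le> \<delta> * (\<Sum>j<m. L^Suc j)" "dist ((f^^n) x) w \<le> L^m * \<delta>"
      by auto
    define \<eta> where "\<eta> = L^m*\<delta>"
    have eta: "0 < \<eta>" "\<eta> \<le> \<delta>0" using L d
      by (auto simp: \<eta>_def power_le_one) (meson dual_order.trans less_imp_le mult_left_le_one_le power_le_one zero_le_power)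
    have po: "pseudo_orbit S f \<eta> (splice f x n w)"
      by (rule splice_po[OF fS x(1) w]) (use eta x in \<open>auto simp: \<eta>_def\<close>)
    obtain x' where x': "x' \<in> S" "shadowed_by f (L*\<eta>) (splice f x n w) x'"
      using sh[OF eta po] by blast
    have "dist ((f^^0) x') (splice f x n w 0) \<le> L*\<eta>" "dist ((f^^n) x') (splice f x n w n) \<le> L*\<eta>"
      using x'(2) unfolding shadowed_by_def by blast+
    then have h: "dist x' x \<le> L^Suc m * \<delta>" "dist ((f^^n) x') w \<le> L^Suc m * \<delta>"
      using n by (auto simp: splice_def \<eta>_def mult.assoc)
    have "dist y x' \<le> dist y x + dist x' x" by (simp add: dist_triangle2)
    also have "\<dots> \<le> \<delta> * (\<Sum>j<Suc m. L^Suc j)" using x(2) h(1) by (simp add: distrib_left mult.commute)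
    finally show ?case using x' h by blast
  qed
  define B where "B = \<delta> * (L/(1-L))"
  define A where "A = S \<inter> cball y B"
  have B: "\<delta> * (\<Sum>j<m. L^Suc j) \<le> B" for m
    unfolding B_def using mult_left_mono[OF geo_bound[OF L, of m], of \<delta>] d by simp
  have cA: "compact A" unfolding A_def using cS by (simp add: compact_Int_closed)
  have "0 \<le> B" unfolding B_def using d L by simp
  then have nA: "A \<noteq> {}" unfolding A_def using y by auto
  have cont: "continuous_on A (\<lambda>x. dist ((f^^n) x) w)"
    by (intro continuous_intros continuous_on_subset[OF funpow_cont[OF fS cf]]) (auto simp: A_def)
  obtain x0 where x0: "x0 \<in> A" "\<And>x. x \<in> A \<Longrightarrow> dist ((f^^n) x0) w \<le> dist ((f^^n) x) w"
    using continuous_attains_inf[OF cA nA cont] by blast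
  have le: "dist ((f^^n) x0) w \<le> L^m * \<delta>" for m
  proof -
    obtain x where "x \<in> S" "dist y x \<le> \<delta> * (\<Sum>j<m. L^Suc j)" "dist ((f^^n) x) w \<le> L^m * \<delta>"
      using step by blast
    then have "x \<in> A" using B[of m] by (auto simp: A_def)
    then show ?thesis using x0(2) \<open>dist ((f^^n) x) w \<le> L^m * \<delta>\<close> by fastforce
  qed
  have "dist ((f^^n) x0) w = 0"
  proof (rule ccontr)
    assume "dist ((f^^n) x0) w \<noteq> 0"
    then have pos: "dist ((f^^n) x0) w / \<delta> > 0" using d by simp
    obtain m where "L^m < dist ((f^^n) x0) w / \<delta>" using real_arch_pow_inv[OF pos L(2)] by blast
    then have "L^m * \<delta> < dist ((f^^n) x0) w" using d by (simp add: field_simps)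
    then show False using le[of m] by simp
  qed
  then show ?thesis using x0(1) unfolding A_def B_def by auto
qed

lemma key:
  fixes S :: "'a::metric_space set"
  assumes fS: "\<And>x. x \<in> S \<Longrightarrow> f x \<in> S"
    and inj: "\<And>x y. x \<in> S \<Longrightarrow> y \<in> S \<Longrightarrow> f x = f y \<Longrightarrow> x = y"
    and sh: "\<And>\<eta> xs. 0 < \<eta> \<Longrightarrow> \<eta> \<le> \<delta>0 \<Longrightarrow> pseudo_orbit S f \<eta> xs \<Longrightarrow> \<exists>x\<in>S. shadowed_by f (L*\<eta>) xs x"
    and L: "0 < L" "L < 1" and d0: "0 < \<delta>0"
    and cS: "compact S" and cf: "continuous_on S f"
    and a: "a \<in> S" and b: "b \<in> S" and k: "k > 0" and dab: "dist ((f^^k) a) ((f^^k) b) \<le> \<delta>0"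
  shows "dist a b \<le> L^k * \<delta>0 / (1-L)"
proof -
  obtain z where z: "z \<in> S" "dist z a \<le> L^k*\<delta>0" "dist ((f^^k) z) ((f^^k) b) \<le> L^k*\<delta>0"
    using lemma_M[OF fS sh L d0 a b dab, of k] by auto
  have eta: "0 < L^k*\<delta>0" "L^k*\<delta>0 \<le> \<delta>0" using L d0
    by (auto simp: power_le_one mult_le_cancel_right1)
  obtain y' where y': "y' \<in> S" "(f^^k) y' = (f^^k) b" "dist z y' \<le> L^k*\<delta>0 * (L/(1-L))"
    using lemma_R[OF fS sh L eta cS cf z(1) funpow_in[OF fS b] k z(3)] by blast
  have "y' = b" using funpow_inj[OF fS inj y'(1) b y'(2)] .
  then have "dist a b \<le> L^k*\<delta>0 + L^k*\<delta>0 * (L/(1-L))"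
    using z(2) y'(3) dist_triangle[of a b z] by (simp add: dist_commute)
  also have "\<dots> = L^k * \<delta>0 / (1-L)" using L by (simp add: field_simps)
  finally show ?thesis .
qed

theorem theorem1p4:
  fixes S :: "'a::metric_space set" and f :: "'a \<Rightarrow> 'a"
  assumes "compact S"
    and "\<exists>g. homeomorphism S S f g"
    and "contractive_shadowing S f"
  shows "finite S"
proof (rule ccontr)
  assume inf: "infinite S"
  obtain g where hom: "homeomorphism S S f g" using assms(2) by blast
  have fS: "\<And>x. x \<in> S \<Longrightarrow> f x \<in> S" using hom unfolding homeomorphism_def by blast
  have cf: "continuous_on S f" using hom unfolding homeomorphism_def by blast
  have gf: "\<forall>x\<in>S. g (f x) = x" using hom unfolding homeomorphism_def by blast
  have inj: "\<And>x y. x \<in> S \<Longrightarrow> y \<in> S \<Longrightarrow> f x = f y \<Longrightarrow> x = y"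
    using gf by metis
  obtain L where L: "0 < L" "L < 1" and ls: "lipschitz_shadowing S f L"
    using assms(3) unfolding contractive_shadowing_def by blast
  obtain \<delta>0 where d0: "0 < \<delta>0"
    and sh0: "\<forall>\<delta>. 0 < \<delta> \<and> \<delta> \<le> \<delta>0 \<longrightarrow> (\<forall>xs. pseudo_orbit S f \<delta> xs \<longrightarrow> (\<exists>x\<in>S. shadowed_by f (L * \<delta>) xs x))"
    using ls unfolding lipschitz_shadowing_def by (elim exE conjE) (rule that)
  have sh: "\<And>\<eta> xs. 0 < \<eta> \<Longrightarrow> \<eta> \<le> \<delta>0 \<Longrightarrow> pseudo_orbit S f \<eta> xs \<Longrightarrow> \<exists>x\<in>S. shadowed_by f (L*\<eta>) xs x"
    using sh0 by simp
  have tb: "\<forall>\<epsilon>>0. \<exists>k. finite k \<and> k \<subseteq> S \<and> S \<subseteq> (\<Union>x\<in>k. ball x \<epsilon>)"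
    by (rule seq_compact_imp_totally_bounded[OF compact_imp_seq_compact[OF assms(1)]])
  have "\<delta>0/2 > 0" using d0 by simp
  with tb obtain T where T: "finite T" "T \<subseteq> S" "S \<subseteq> (\<Union>x\<in>T. ball x (\<delta>0/2))"
    by (elim allE[of _ "\<delta>0/2"] impE exE conjE) auto
  obtain F where F: "finite F" "card F = Suc (card T)" "F \<subseteq> S"
    using infinite_arbitrarily_large[OF inf] by blast
  define D where "D = insert 1 ((\<lambda>(p,q). dist p q) ` {(p,q). p \<in> F \<and> q \<in> F \<and> p \<noteq> q})"
  define m where "m = Min D"
  have fD: "finite D" unfolding D_def using F(1)
    by (intro finite.insertI finite_imageI) (auto intro: finite_subset[of _ "F \<times> F"])
  have mpos: "m > 0" unfolding m_def using fD by (auto simp: D_def)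
  have mle: "m \<le> dist p q" if "p \<in> F" "q \<in> F" "p \<noteq> q" for p q
    unfolding m_def using fD that by (intro Min_le) (auto simp: D_def)
  obtain n where n: "L^n < m * (1-L) / \<delta>0" using real_arch_pow_inv[of "m * (1-L) / \<delta>0" L] mpos L d0 by auto
  define k where "k = Suc n"
  have "L^k \<le> L^n" unfolding k_def using L by (intro power_decreasing) auto
  then have "L^k * \<delta>0 \<le> L^n * \<delta>0" using d0 by (intro mult_right_mono) auto
  moreover have "L^n * \<delta>0 < m * (1-L)" using n d0 by (simp add: pos_less_divide_eq)
  ultimately have "L^k * \<delta>0 < m * (1-L)" by linarith
  then have kk: "L^k * \<delta>0 / (1-L) < m" using L by (simp add: pos_divide_less_eq)
  have "\<forall>p\<in>F. \<exists>c\<in>T. (f^^k) p \<in> ball c (\<delta>0/2)"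
  proof
    fix p assume "p \<in> F"
    then have "(f^^k) p \<in> S" using F(3) funpow_in[of S f p k] fS by blast
    then show "\<exists>c\<in>T. (f^^k) p \<in> ball c (\<delta>0/2)" using T(3) by blast
  qed
  then obtain \<phi> where \<phi>0: "\<forall>p\<in>F. \<phi> p \<in> T \<and> (f^^k) p \<in> ball (\<phi> p) (\<delta>0/2)"
    using bchoice[of F "\<lambda>p c. c \<in> T \<and> (f^^k) p \<in> ball c (\<delta>0/2)"] by blast
  then have \<phi>: "\<And>p. p \<in> F \<Longrightarrow> \<phi> p \<in> T \<and> (f^^k) p \<in> ball (\<phi> p) (\<delta>0/2)" by blast
  have "\<not> inj_on \<phi> F"
  proof
    assume "inj_on \<phi> F"
    then have "card F \<le> card T" using card_inj_on_le[of \<phi> F T] \<phi> T(1) by blast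
    then show False using F(2) by simp
  qed
  then obtain p q where pq: "p \<in> F" "q \<in> F" "p \<noteq> q" "\<phi> p = \<phi> q" unfolding inj_on_def by blast
  have h1: "dist ((f^^k) p) (\<phi> p) < \<delta>0/2" using \<phi>[OF pq(1)] by (simp add: dist_commute)
  have h2: "dist (\<phi> p) ((f^^k) q) < \<delta>0/2" using \<phi>[OF pq(2)] pq(4) by simp
  have "dist ((f^^k) p) ((f^^k) q) \<le> dist ((f^^k) p) (\<phi> p) + dist (\<phi> p) ((f^^k) q)"
    by (rule dist_triangle)
  then have dk: "dist ((f^^k) p) ((f^^k) q) \<le> \<delta>0" using h1 h2 by linarith
  have pS: "p \<in> S" "q \<in> S" using pq F(3) by auto
  have k0: "0 < k" unfolding k_def by simp
  have "dist p q \<le> L^k * \<delta>0 / (1-L)"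
    by (rule key[OF fS inj sh L d0 assms(1) cf pS k0 dk])
  then show False using kk mle[OF pq(1-3)] by simp
qed

end
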